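(* Let $n\ge 4$, $\bar K>0$, and let $M$ be an $n$-dimensional submanifold of $\mathbb{S}^{n+p}(1/\sqrt{\bar K})$ satisfying $|\mathring A|^2<\mathring a(|H|^2)-\epsilon\omega$ for some $\epsilon>0$, where $\omega=\frac{|H|^2}{n-1}+2n\bar K$. Then the Ricci curvature of $M$ satisfies $\operatorname{Ric}_M\ge\frac{n-1}{n}\epsilon\,\omega>\frac{\epsilon}{n}|H|^2$.
   Context: $A$ is the second fundamental form, $H$ the mean curvature vector, $\mathring A=A-\frac Hn g$. For $x\ge0$: $a(x)=\sqrt{\big(\frac{x}{n-1}+2\bar K\big)^2+(2n-4)\bar K^2}$, $\mathring a(x)=a(x)-\frac xn$. *)

theory Defs
  imports Complex_Main
begin

text \<open>Pointwise data of an n-dimensional submanifold M of the sphere of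
curvature Kb in R^(n+p+1).  At a point, with respect to an orthonormal tangent
frame e_0..e_(n-1) and an orthonormal normal frame nu_0..nu_(p-1), the second
fundamental form is given by its components h a i j = <A(e_i,e_j), nu_a>.\<close>

definition meanCurv :: "nat \<Rightarrow> (nat \<Rightarrow> nat \<Rightarrow> nat \<Rightarrow> real) \<Rightarrow> nat \<Rightarrow> real" where
  "meanCurv n h a = (\<Sum>i<n. h a i i)"

definition normH2 :: "nat \<Rightarrow> nat \<Rightarrow> (nat \<Rightarrow> nat \<Rightarrow> nat \<Rightarrow> real) \<Rightarrow> real" where
  "normH2 n p h = (\<Sum>a<p. (meanCurv n h a)\<^sup>2)"

definition traceless :: "nat \<Rightarrow> (nat \<Rightarrow> nat \<Rightarrow> nat \<Rightarrow> real) \<Rightarrow> nat \<Rightarrow> nat \<Rightarrow> nat \<Rightarrow> real" where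
  "traceless n h a i j = h a i j - (if i = j then meanCurv n h a / real n else 0)"

definition normAo2 :: "nat \<Rightarrow> nat \<Rightarrow> (nat \<Rightarrow> nat \<Rightarrow> nat \<Rightarrow> real) \<Rightarrow> real" where
  "normAo2 n p h = (\<Sum>a<p. \<Sum>i<n. \<Sum>j<n. (traceless n h a i j)\<^sup>2)"

text \<open>Riemann curvature tensor of M via the Gauss equation for a submanifold
of the space form of constant curvature Kb.\<close>
definition riemGauss :: "nat \<Rightarrow> real \<Rightarrow> (nat \<Rightarrow> nat \<Rightarrow> nat \<Rightarrow> real) \<Rightarrow> nat \<Rightarrow> nat \<Rightarrow> nat \<Rightarrow> nat \<Rightarrow> real" where
  "riemGauss p Kb h i j k l =
     Kb * ((if i = k then 1 else 0) * (if j = l then 1 else 0)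
           - (if i = l then 1 else 0) * (if j = k then 1 else 0))
     + (\<Sum>a<p. h a i k * h a j l - h a i l * h a j k)"

definition ricci :: "nat \<Rightarrow> nat \<Rightarrow> real \<Rightarrow> (nat \<Rightarrow> nat \<Rightarrow> nat \<Rightarrow> real) \<Rightarrow> (nat \<Rightarrow> real) \<Rightarrow> real" where
  "ricci n p Kb h v = (\<Sum>j<n. \<Sum>i<n. \<Sum>k<n. v i * v k * riemGauss p Kb h i j k j)"

definition vnorm2 :: "nat \<Rightarrow> (nat \<Rightarrow> real) \<Rightarrow> real" where
  "vnorm2 n v = (\<Sum>i<n. (v i)\<^sup>2)"

definition aFun :: "nat \<Rightarrow> real \<Rightarrow> real \<Rightarrow> real" where
  "aFun n Kb x = sqrt ((x / (real n - 1) + 2 * Kb)\<^sup>2 + (2 * real n - 4) * Kb\<^sup>2)"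

definition aoFun :: "nat \<Rightarrow> real \<Rightarrow> real \<Rightarrow> real" where
  "aoFun n Kb x = aFun n Kb x - x / real n"

definition omegaFun :: "nat \<Rightarrow> real \<Rightarrow> real \<Rightarrow> real" where
  "omegaFun n Kb x = x / (real n - 1) + 2 * real n * Kb"

end

theory Submission
  imports Defs "HOL-Analysis.Convex"
begin


lemma mat_ineq:
  fixes B :: "nat \<Rightarrow> nat \<Rightarrow> real" and v w :: "nat \<Rightarrow> real" and n :: nat
  assumes sym: "\<And>i j. B i j = B j i" and tr: "(\<Sum>i<n. B i i) = 0"
    and r_def: "r = (\<Sum>i<n. v i * v i)"
    and w_def: "w = (\<lambda>i. \<Sum>j<n. B i j * v j)"
    and s_def: "s = (\<Sum>i<n. v i * w i)"
    and q_def: "q = (\<Sum>i<n. w i * w i)"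
    and N_def: "N = (\<Sum>i<n. \<Sum>j<n. B i j * B i j)"
    and c_def: "c = s / (real n - 1)"
  shows "0 \<le> r\<^sup>2 * (r\<^sup>2 * N - 2 * r * q + s\<^sup>2) - 2 * c * r\<^sup>2 * s + c\<^sup>2 * ((real n - 1) * r\<^sup>2)"
proof -
  have hr: "(\<Sum>j<n. v j * v j) = r" using r_def by simp
  have hs: "(\<Sum>j<n. v j * w j) = s" using s_def by simp
  have hw: "(\<Sum>j<n. B i j * v j) = w i" for i using w_def by simp
  define D where "D i j = r\<^sup>2 * B i j - r * w i * v j - r * v i * w j + s * v i * v j" for i j
  define P where "P i j = r * (if i = j then 1 else 0) - v i * v j" for i j
  have Dsym: "D i j = D j i" for i j unfolding D_def using sym by simp
  have Dv: "(\<Sum>j<n. D i j * v j) = 0" for i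
  proof -
    have "(\<Sum>j<n. D i j * v j) = r\<^sup>2 * (\<Sum>j<n. B i j * v j) - r * w i * (\<Sum>j<n. v j * v j)
       - r * v i * (\<Sum>j<n. v j * w j) + s * v i * (\<Sum>j<n. v j * v j)"
      by (simp add: D_def algebra_simps sum.distrib sum_subtractf sum_distrib_left)
    also have "\<dots> = 0" unfolding hr hs hw by (simp add: algebra_simps power2_eq_square)
    finally show ?thesis .
  qed
  have Dv2: "(\<Sum>i<n. D i j * v i) = 0" for j
    using Dv[of j] by (simp add: Dsym)
  have DB: "(\<Sum>i<n. \<Sum>j<n. D i j * B i j) = r\<^sup>2 * N - 2 * r * q + s\<^sup>2"
  proof -
    have "(\<Sum>i<n. \<Sum>j<n. D i j * B i j) = r\<^sup>2 * (\<Sum>i<n. \<Sum>j<n. B i j * B i j)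
        - r * (\<Sum>i<n. \<Sum>j<n. w i * v j * B i j) - r * (\<Sum>i<n. \<Sum>j<n. v i * w j * B i j)
        + s * (\<Sum>i<n. \<Sum>j<n. v i * v j * B i j)"
      by (simp add: D_def algebra_simps sum.distrib sum_subtractf sum_distrib_left)
    moreover have "(\<Sum>i<n. \<Sum>j<n. w i * v j * B i j) = q"
      unfolding q_def by (simp add: hw[symmetric] sum_distrib_left mult_ac)
    moreover have "(\<Sum>i<n. \<Sum>j<n. v i * w j * B i j) = q"
    proof -
      have "(\<Sum>i<n. \<Sum>j<n. v i * w j * B i j) = (\<Sum>j<n. \<Sum>i<n. w j * (B j i * v i))"
        by (subst sum.swap) (simp add: sym[of _ j for j] mult_ac)
      also have "\<dots> = q" unfolding q_def by (simp add: hw sum_distrib_left[symmetric])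
      finally show ?thesis .
    qed
    moreover have "(\<Sum>i<n. \<Sum>j<n. v i * v j * B i j) = s"
      unfolding hs[symmetric] by (simp add: hw[symmetric] sum_distrib_left mult_ac)
    ultimately show ?thesis using N_def by (simp add: power2_eq_square)
  qed
  have DD: "(\<Sum>i<n. \<Sum>j<n. D i j * D i j) = r\<^sup>2 * (r\<^sup>2 * N - 2 * r * q + s\<^sup>2)"
  proof -
    have e: "D i j * D i j = r\<^sup>2 * (D i j * B i j) - r * (w i * (D i j * v j)) - r * (w j * (D i j * v i))
        + s * (v i * (D i j * v j))" for i j
      by (simp add: D_def[of i j] algebra_simps)
    have "(\<Sum>i<n. \<Sum>j<n. D i j * D i j) = r\<^sup>2 * (\<Sum>i<n. \<Sum>j<n. D i j * B i j)
        - r * (\<Sum>i<n. w i * (\<Sum>j<n. D i j * v j)) - r * (\<Sum>i<n. \<Sum>j<n. w j * (D i j * v i))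
        + s * (\<Sum>i<n. v i * (\<Sum>j<n. D i j * v j))"
      unfolding e by (simp add: sum.distrib sum_subtractf sum_distrib_left)
    moreover have "(\<Sum>i<n. \<Sum>j<n. w j * (D i j * v i)) = 0"
      by (subst sum.swap) (simp add: sum_distrib_left[symmetric] Dv2)
    ultimately show ?thesis using DB Dv by simp
  qed
  have Dtr: "(\<Sum>i<n. D i i) = - r * s"
  proof -
    have "(\<Sum>i<n. D i i) = r\<^sup>2 * (\<Sum>i<n. B i i) - 2 * r * (\<Sum>i<n. v i * w i) + s * (\<Sum>i<n. v i * v i)"
      by (simp add: D_def algebra_simps sum.distrib sum_subtractf sum_distrib_left)
    then show ?thesis using tr r_def s_def by (simp add: power2_eq_square)
  qed
  have DP: "(\<Sum>i<n. \<Sum>j<n. D i j * P i j) = - r\<^sup>2 * s"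
  proof -
    have "(\<Sum>i<n. \<Sum>j<n. D i j * P i j) = r * (\<Sum>i<n. D i i) - (\<Sum>i<n. v i * (\<Sum>j<n. D i j * v j))"
    proof -
      have e: "D i j * P i j = r * (if i = j then D i j else 0) - v i * (D i j * v j)" for i j
        by (simp add: P_def algebra_simps)
      have d: "(\<Sum>j<n. r * (if i = j then D i j else 0)) = r * D i i" if "i < n" for i
        using that by (simp add: if_distrib[of "(*) r"] cong: if_cong)
      show ?thesis unfolding e by (simp add: sum_subtractf sum_distrib_left d)
    qed
    then show ?thesis using Dtr Dv by (simp add: power2_eq_square)
  qed
  have PP: "(\<Sum>i<n. \<Sum>j<n. P i j * P i j) = (real n - 1) * r\<^sup>2"
  proof -
    have "(\<Sum>i<n. \<Sum>j<n. P i j * P i j) = r * r * real n - 2 * r * (\<Sum>i<n. v i * v i) + (\<Sum>i<n. v i * v i) * (\<Sum>j<n. v j * v j)"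
    proof -
      have e: "P i j * P i j = r * r * (if i = j then 1 else 0) - 2 * r * (if i = j then v i * v j else 0) + (v i * v i) * (v j * v j)" for i j
        by (simp add: P_def algebra_simps)
      have d1: "(\<Sum>j<n. r * r * (if i = j then 1 else 0)) = r * r" if "i < n" for i
        using that by (simp add: if_distrib[of "(*) (r*r)"] cong: if_cong)
      have d2: "(\<Sum>j<n. 2 * r * (if i = j then v i * v j else 0)) = 2 * r * (v i * v i)" if "i < n" for i
        using that by (simp add: if_distrib[of "(*) (2*r)"] cong: if_cong)
      show ?thesis unfolding e by (simp add: sum.distrib sum_subtractf d1 d2 sum_distrib_left sum_distrib_right) (simp add: mult.commute)
    qed
    then show ?thesis using r_def by (simp add: power2_eq_square algebra_simps)
  qed
  have "0 \<le> (\<Sum>i<n. \<Sum>j<n. (D i j + c * P i j) * (D i j + c * P i j))"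
    by (intro sum_nonneg) simp
  also have "\<dots> = (\<Sum>i<n. \<Sum>j<n. D i j * D i j) + 2 * c * (\<Sum>i<n. \<Sum>j<n. D i j * P i j) + c\<^sup>2 * (\<Sum>i<n. \<Sum>j<n. P i j * P i j)"
    by (simp add: algebra_simps sum.distrib sum_distrib_left power2_eq_square)
  finally show ?thesis using DD DP PP by (simp add: algebra_simps)
qed
lemma mat2:
  fixes B :: "nat \<Rightarrow> nat \<Rightarrow> real" and v w :: "nat \<Rightarrow> real" and n :: nat
  assumes sym: "\<And>i j. B i j = B j i" and tr: "(\<Sum>i<n. B i i) = 0"
    and r_def: "r = (\<Sum>i<n. v i * v i)"
    and w_def: "w = (\<lambda>i. \<Sum>j<n. B i j * v j)"
    and s_def: "s = (\<Sum>i<n. v i * w i)"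
    and q_def: "q = (\<Sum>i<n. w i * w i)"
    and N_def: "N = (\<Sum>i<n. \<Sum>j<n. B i j * B i j)"
    and r0: "r > 0" and n2: "n \<ge> 2"
  shows "q \<le> r * N / 2 + (real n - 2) / (2 * (real n - 1)) * s\<^sup>2 / r"
    and "s\<^sup>2 \<le> (real n - 1) / real n * r\<^sup>2 * N"
proof -
  have m1: "real n - 1 > 0" using n2 by simp
  have "0 \<le> r\<^sup>2 * (r\<^sup>2 * N - 2 * r * q + s\<^sup>2) - 2 * (s / (real n - 1)) * r\<^sup>2 * s + (s / (real n - 1))\<^sup>2 * ((real n - 1) * r\<^sup>2)"
    by (rule mat_ineq[OF sym tr r_def w_def s_def q_def N_def refl])
  also have "\<dots> = r\<^sup>2 * (r\<^sup>2 * N - 2 * r * q + (real n - 2) / (real n - 1) * s\<^sup>2)"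
  proof -
    define c where "c = s / (real n - 1)"
    have hc: "c * (real n - 1) = s" unfolding c_def using m1 by simp
    have h2: "(real n - 2) / (real n - 1) * s\<^sup>2 = s\<^sup>2 - c * s"
      unfolding c_def using m1 by (simp add: field_simps power2_eq_square)
    have "(s / (real n - 1))\<^sup>2 * ((real n - 1) * r\<^sup>2) = c * s * r\<^sup>2"
      unfolding c_def[symmetric] hc[symmetric] by (simp add: power2_eq_square)
    thus ?thesis unfolding h2 c_def[symmetric] by (simp add: algebra_simps power2_eq_square)
  qed
  finally have "0 \<le> r\<^sup>2 * N - 2 * r * q + (real n - 2) / (real n - 1) * s\<^sup>2"
    using r0 by (simp add: zero_le_mult_iff)
  hence A: "2 * r * q \<le> r\<^sup>2 * N + (real n - 2) / (real n - 1) * s\<^sup>2" by simp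
  have CS: "s\<^sup>2 \<le> r * q"
    unfolding s_def r_def q_def using Cauchy_Schwarz_ineq_sum[of v w "{..<n}"]
    by (simp add: power2_eq_square)
  show "q \<le> r * N / 2 + (real n - 2) / (2 * (real n - 1)) * s\<^sup>2 / r"
  proof -
    have "q = (2 * r * q) / (2 * r)" using r0 by simp
    also have "\<dots> \<le> (r\<^sup>2 * N + (real n - 2) / (real n - 1) * s\<^sup>2) / (2 * r)"
      using A r0 by (intro divide_right_mono) auto
    also have "\<dots> = r * N / 2 + (real n - 2) / (2 * (real n - 1)) * s\<^sup>2 / r"
      using r0 m1 by (simp add: field_simps power2_eq_square)
    finally show ?thesis .
  qed
  show "s\<^sup>2 \<le> (real n - 1) / real n * r\<^sup>2 * N"
  proof -
    have "2 * s\<^sup>2 \<le> r\<^sup>2 * N + (real n - 2) / (real n - 1) * s\<^sup>2" using A CS r0 by linarith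
    hence "(2 - (real n - 2) / (real n - 1)) * s\<^sup>2 \<le> r\<^sup>2 * N" by (simp add: algebra_simps)
    moreover have "2 - (real n - 2) / (real n - 1) = real n / (real n - 1)" using m1 by (simp add: field_simps)
    ultimately have "real n / (real n - 1) * s\<^sup>2 \<le> r\<^sup>2 * N" by simp
    hence "(real n - 1) / real n * (real n / (real n - 1) * s\<^sup>2) \<le> (real n - 1) / real n * (r\<^sup>2 * N)"
      using m1 by (intro mult_left_mono) auto
    moreover have "(real n - 1) / real n * (real n / (real n - 1) * s\<^sup>2) = s\<^sup>2"
      using m1 n2 by (simp add: field_simps)
    ultimately show ?thesis by (simp add: mult.assoc)
  qed
qed


lemma ricci_expand:
  fixes g :: "nat \<Rightarrow> nat \<Rightarrow> nat \<Rightarrow> real"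
  assumes sym: "\<And>a i j. g a i j = g a j i"
  shows "ricci n p Kb g v = Kb * (real n - 1) * vnorm2 n v
     + (\<Sum>a<p. meanCurv n g a * (\<Sum>i<n. \<Sum>k<n. v i * v k * g a i k) - (\<Sum>j<n. (\<Sum>i<n. v i * g a i j)\<^sup>2))"
proof -
  define F where "F a i j k = v i * v k * g a i k * g a j j - (v i * g a i j) * (v k * g a k j)" for a i j k
  have e: "v i * v k * riemGauss p Kb g i j k j = Kb * (if i = k then v i * v k else 0)
     - Kb * (if i = j \<and> k = j then v i * v k else 0) + (\<Sum>a<p. F a i j k)" for i j k
    by (simp add: riemGauss_def F_def algebra_simps sum_distrib_left sum_subtractf sym[of _ j k])
  have k1: "(\<Sum>k<n. Kb * (if i = k then v i * v k else 0)) = Kb * (v i * v i)" if "i < n" for i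
    using that by (simp add: if_distrib[of "(*) Kb"] cong: if_cong)
  have k2: "(\<Sum>k<n. Kb * (if i = j \<and> k = j then v i * v k else 0)) = Kb * (if i = j then v i * v j else 0)"
    if "j < n" for i j
    using that by (cases "i = j") (simp_all add: if_distrib[of "(*) Kb"] cong: if_cong)
  have i2: "(\<Sum>i<n. Kb * (if i = j then v i * v j else 0)) = Kb * (v j * v j)" if "j < n" for j
    using that by (simp add: if_distrib[of "(*) Kb"] cong: if_cong)
  have A: "(\<Sum>j<n. \<Sum>i<n. \<Sum>k<n. \<Sum>a<p. F a i j k) = (\<Sum>a<p. \<Sum>j<n. \<Sum>i<n. \<Sum>k<n. F a i j k)"
    by (simp only: sum.swap[of _ "{..<n}" "{..<p}"])
  have Fa: "(\<Sum>j<n. \<Sum>i<n. \<Sum>k<n. F a i j k) = meanCurv n g a * (\<Sum>i<n. \<Sum>k<n. v i * v k * g a i k) - (\<Sum>j<n. (\<Sum>i<n. v i * g a i j)\<^sup>2)" for a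
  proof -
    have "(\<Sum>j<n. \<Sum>i<n. \<Sum>k<n. F a i j k) = (\<Sum>j<n. g a j j * (\<Sum>i<n. \<Sum>k<n. v i * v k * g a i k))
       - (\<Sum>j<n. (\<Sum>i<n. v i * g a i j) * (\<Sum>k<n. v k * g a k j))"
      by (simp add: F_def sum_subtractf sum_distrib_left sum_product mult_ac)
    then show ?thesis by (simp add: meanCurv_def sum_distrib_right power2_eq_square)
  qed
  have "ricci n p Kb g v = (\<Sum>j<n. \<Sum>i<n. Kb * (v i * v i)) - (\<Sum>j<n. Kb * (v j * v j))
      + (\<Sum>j<n. \<Sum>i<n. \<Sum>k<n. \<Sum>a<p. F a i j k)"
    unfolding ricci_def e by (simp add: sum.distrib sum_subtractf k1 k2 i2)
  also have "\<dots> = Kb * (real n - 1) * vnorm2 n v + (\<Sum>a<p. \<Sum>j<n. \<Sum>i<n. \<Sum>k<n. F a i j k)"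
  proof -
    have 1: "(\<Sum>j<n. \<Sum>i<n. Kb * (v i * v i)) = real n * (Kb * vnorm2 n v)"
      by (simp add: vnorm2_def power2_eq_square sum_distrib_left)
    have 2: "(\<Sum>j<n. Kb * (v j * v j)) = Kb * vnorm2 n v"
      by (simp add: vnorm2_def power2_eq_square sum_distrib_left)
    show ?thesis unfolding A 1 2 by (simp add: algebra_simps)
  qed
  finally show ?thesis by (simp add: Fa)
qed


lemma core:
  fixes d K z A u t Y E :: real
  assumes d: "d \<ge> 3" and K: "K > 0" and z: "z \<ge> 0" and Y: "Y \<ge> 0" and E: "E > 0"
    and u: "u = (d+1)*z + 2*K" and A: "A = sqrt (u\<^sup>2 + (2*d-2)*K\<^sup>2)"
    and t: "t \<ge> 0" "t\<^sup>2 = (d-1)\<^sup>2 * z"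
    and pinch: "Y < A - d*z - E"
  shows "E \<le> (d+1)*K + d*z - t * sqrt Y - Y"
proof -
  have u0: "u \<ge> 0" using u d K z by simp
  have "0 \<le> u\<^sup>2 + (2*d-2)*K\<^sup>2" using d by (intro add_nonneg_nonneg mult_nonneg_nonneg) auto
  hence A2: "A\<^sup>2 = u\<^sup>2 + (2*d-2)*K\<^sup>2" and A0: "A \<ge> 0" using A by simp_all
  define L where "L = (d+1)*K + 2*d*z - A"
  have dd: "d*d \<ge> 3*3" using d by (intro mult_mono) auto
  have L0: "L \<ge> 0"
  proof -
    have "A\<^sup>2 \<le> ((d+1)*K + 2*d*z)\<^sup>2"
    proof -
      have "((d+1)*K + 2*d*z)\<^sup>2 - A\<^sup>2 = (d*d-1)*(K*K) + 4*(d*d-1)*K*z + (3*d+1)*(d-1)*(z*z)"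
        unfolding A2 u by (simp add: power2_eq_square algebra_simps)
      moreover have "0 \<le> (d*d-1)*(K*K) + 4*(d*d-1)*K*z + (3*d+1)*(d-1)*(z*z)"
        using dd d K z by (intro add_nonneg_nonneg mult_nonneg_nonneg) auto
      ultimately show ?thesis by simp
    qed
    moreover have "0 \<le> (d+1)*K + 2*d*z" using d K z by (intro add_nonneg_nonneg mult_nonneg_nonneg) auto
    ultimately have "A \<le> (d+1)*K + 2*d*z" by (rule power2_le_imp_le)
    thus ?thesis unfolding L_def by simp
  qed
  have uA: "u * A \<le> u\<^sup>2 + (d-1)*K\<^sup>2"
  proof -
    have "(u*A)\<^sup>2 \<le> (u\<^sup>2 + (d-1)*K\<^sup>2)\<^sup>2"
    proof -
      have "(u\<^sup>2 + (d-1)*K\<^sup>2)\<^sup>2 - (u*A)\<^sup>2 = ((d-1)*K\<^sup>2)\<^sup>2"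
        unfolding power_mult_distrib A2 by (simp add: power2_eq_square algebra_simps)
      thus ?thesis by (metis diff_ge_0_iff_ge zero_le_power2)
    qed
    moreover have "0 \<le> u\<^sup>2 + (d-1)*K\<^sup>2" using d by (intro add_nonneg_nonneg mult_nonneg_nonneg) auto
    ultimately show ?thesis by (rule power2_le_imp_le)
  qed
  have id: "L\<^sup>2 - (d-1)\<^sup>2 * z * (A - d*z) = (d+1) * (u\<^sup>2 + (d-1)*K\<^sup>2 - u*A)"
  proof -
    have e: "L\<^sup>2 = ((d+1)*K + 2*(d*z))\<^sup>2 - 2*((d+1)*K + 2*(d*z))*A + (u\<^sup>2 + (2*d-2) * K\<^sup>2)"
      unfolding A2[symmetric] L_def by (simp add: power2_eq_square algebra_simps)
    show ?thesis unfolding e u by (simp add: power2_eq_square algebra_simps)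
  qed
  have Ao: "A - d*z > 0" using pinch Y E by linarith
  define y0 where "y0 = sqrt (A - d*z)"
  have y02: "y0\<^sup>2 = A - d*z" using Ao y0_def by simp
  have y00: "y0 \<ge> 0" using y0_def Ao by simp
  have tL: "t * y0 \<le> L"
  proof -
    have "(t*y0)\<^sup>2 = (d-1)\<^sup>2 * z * (A - d*z)" unfolding power_mult_distrib t(2) y02 by simp
    also have "\<dots> \<le> L\<^sup>2"
    proof -
      have "0 \<le> (d+1) * (u\<^sup>2 + (d-1)*K\<^sup>2 - u*A)" using uA d by simp
      thus ?thesis using id by linarith
    qed
    finally show ?thesis using L0 by (rule power2_le_imp_le)
  qed
  have yy: "sqrt Y \<le> y0" unfolding y0_def using pinch E by (intro real_sqrt_le_mono) linarith
  have "t * sqrt Y \<le> t * y0" using t(1) yy by (intro mult_left_mono) auto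
  moreover have "(sqrt Y)\<^sup>2 = Y" using Y by simp
  ultimately show ?thesis using tL pinch y02 unfolding L_def by linarith
qed


lemma scalar:
  fixes n :: nat and K \<epsilon> X Y :: real
  assumes n: "n \<ge> 4" and K: "K > 0" and e: "\<epsilon> > 0" and X: "X \<ge> 0" and Y: "Y \<ge> 0"
    and pinch: "Y < aoFun n K X - \<epsilon> * omegaFun n K X"
  shows "\<epsilon> * omegaFun n K X \<le> real n * K + X / real n
           - (real n - 2) / (real n - 1) * sqrt ((real n - 1) / real n) * sqrt X * sqrt Y - Y"
proof -
  define d where "d = real n - 1"
  have d3: "d \<ge> 3" using n unfolding d_def by simp
  have nd: "real n = d + 1" unfolding d_def by simp
  define z where "z = X / (d * (d+1))"
  have z0: "z \<ge> 0" using X d3 unfolding z_def by simp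
  have Xz: "X = d * (d+1) * z" using d3 unfolding z_def by simp
  have X1: "X / real n = d * z" and X2: "X / (real n - 1) = (d+1) * z"
    using d3 unfolding Xz nd by (simp_all add: field_simps)
  define u where "u = (d+1)*z + 2*K"
  define A where "A = sqrt (u\<^sup>2 + (2*d-2)*K\<^sup>2)"
  have ao: "aoFun n K X = A - d*z"
    unfolding aoFun_def aFun_def A_def u_def X1 X2 by (simp add: nd algebra_simps)
  define t where "t = (real n - 2) / (real n - 1) * sqrt ((real n - 1) / real n) * sqrt X"
  have t0: "t \<ge> 0" unfolding t_def using n X by simp
  have t2: "t\<^sup>2 = (d-1)\<^sup>2 * z"
  proof -
    have "t\<^sup>2 = ((real n - 2) / (real n - 1))\<^sup>2 * ((real n - 1) / real n) * X"
      unfolding t_def power_mult_distrib using n X by simp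
    also have "\<dots> = (d-1)\<^sup>2 * z"
    proof -
      have p: "d*d + d*(d*d) > 0" using d3 by (simp add: add_pos_pos)
      show ?thesis unfolding nd Xz using d3 p by (simp add: field_simps power2_eq_square)
    qed
    finally show ?thesis .
  qed
  have om: "omegaFun n K X > 0" unfolding omegaFun_def X2 using d3 K z0 nd
    by (intro add_nonneg_pos mult_nonneg_nonneg mult_pos_pos) auto
  have "\<epsilon> * omegaFun n K X \<le> (d+1)*K + d*z - t * sqrt Y - Y"
    using core[OF d3 K z0 Y _ u_def A_def t0 t2] pinch om e unfolding ao by simp
  thus ?thesis unfolding t_def X1 nd[symmetric] by (simp add: mult.assoc)
qed


lemma per_a:
  fixes g :: "nat \<Rightarrow> nat \<Rightarrow> nat \<Rightarrow> real"
  assumes sym: "\<And>a i j. g a i j = g a j i" and n: "n > 0"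
    and w_def: "w = (\<lambda>i. \<Sum>j<n. traceless n g a i j * v j)"
    and s_def: "s = (\<Sum>i<n. v i * w i)"
    and q_def: "q = (\<Sum>i<n. w i * w i)"
    and r_def: "r = (\<Sum>i<n. v i * v i)"
  shows "meanCurv n g a * (\<Sum>i<n. \<Sum>k<n. v i * v k * g a i k) - (\<Sum>j<n. (\<Sum>i<n. v i * g a i j)\<^sup>2)
     = (real n - 1) / (real n)\<^sup>2 * (meanCurv n g a)\<^sup>2 * r + (real n - 2) / real n * meanCurv n g a * s - q"
proof -
  define H where "H = meanCurv n g a"
  have gB: "g a i j = traceless n g a i j + (if i = j then H / real n else 0)" for i j
    unfolding traceless_def H_def by simp
  have Bsym: "traceless n g a i j = traceless n g a j i" for i j
    unfolding traceless_def using sym by simp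
  have W: "(\<Sum>i<n. v i * g a i j) = w j + H * v j / real n" if "j < n" for j
  proof -
    have "(\<Sum>i<n. v i * g a i j) = (\<Sum>i<n. traceless n g a j i * v i) + (\<Sum>i<n. (if i = j then H / real n * v i else 0))"
    proof -
      have e: "v i * g a i j = traceless n g a j i * v i + (if i = j then H / real n * v i else 0)" for i
        using gB[of i j] Bsym[of i j] by (simp add: algebra_simps)
      show ?thesis unfolding e by (simp only: sum.distrib)
    qed
    also have "\<dots> = w j + H * v j / real n" using that w_def by simp
    finally show ?thesis .
  qed
  have S: "(\<Sum>i<n. \<Sum>k<n. v i * v k * g a i k) = s + H * r / real n"
  proof -
    have "(\<Sum>i<n. \<Sum>k<n. v i * v k * g a i k) = (\<Sum>i<n. v i * (\<Sum>k<n. v k * g a k i))"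
    proof -
      have e: "v i * v k * g a i k = v i * (v k * g a k i)" for i k using sym[of a i k] by simp
      show ?thesis unfolding e by (simp only: sum_distrib_left)
    qed
    also have "\<dots> = (\<Sum>i<n. v i * (w i + H * v i / real n))" by (intro sum.cong refl) (simp add: W)
    also have "\<dots> = s + H * r / real n" unfolding s_def r_def
      by (simp add: algebra_simps sum.distrib sum_distrib_left sum_divide_distrib)
    finally show ?thesis .
  qed
  have Q: "(\<Sum>j<n. (\<Sum>i<n. v i * g a i j)\<^sup>2) = q + 2 * H / real n * s + H\<^sup>2 / (real n)\<^sup>2 * r"
  proof -
    have "(\<Sum>j<n. (\<Sum>i<n. v i * g a i j)\<^sup>2) = (\<Sum>j<n. (w j + H * v j / real n)\<^sup>2)"
      by (intro sum.cong refl) (simp add: W)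
    also have "\<dots> = q + 2 * H / real n * s + H\<^sup>2 / (real n)\<^sup>2 * r" unfolding q_def s_def r_def
      by (simp add: power2_eq_square algebra_simps sum.distrib sum_distrib_left sum_divide_distrib)
    finally show ?thesis .
  qed
  show ?thesis unfolding S Q H_def[symmetric] using n
    by (simp add: field_simps power2_eq_square)
qed


lemma combine:
  fixes m K r X Y SH S2 Q E :: real
  assumes m: "m \<ge> 4" and r: "r > 0" and X: "X \<ge> 0" and Y: "Y \<ge> 0" and S20: "S2 \<ge> 0"
    and S2: "S2 \<le> (m-1)/m * r\<^sup>2 * Y" and SH: "SH \<ge> - (sqrt X * sqrt S2)"
    and Q: "Q \<le> r*Y/2 + (m-2)/(2*(m-1)) * S2 / r"
    and P: "E \<le> m*K + X/m - (m-2)/(m-1) * sqrt((m-1)/m) * sqrt X * sqrt Y - Y"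
  shows "(m-1)/m * E * r \<le> K*(m-1)*r + (m-1)/m\<^sup>2 * X * r + (m-2)/m * SH - Q"
proof -
  define \<kappa> where "\<kappa> = sqrt((m-1)/m)"
  have k0: "\<kappa> \<ge> 0" unfolding \<kappa>_def using m by simp
  have sq: "sqrt S2 \<le> r * \<kappa> * sqrt Y"
  proof -
    have "sqrt S2 \<le> sqrt ((m-1)/m * r\<^sup>2 * Y)" using S2 by (rule real_sqrt_le_mono)
    also have "\<dots> = sqrt ((m-1)/m) * sqrt (r\<^sup>2) * sqrt Y" by (simp only: real_sqrt_mult)
    also have "\<dots> = r * \<kappa> * sqrt Y" unfolding \<kappa>_def using r by simp
    finally show ?thesis .
  qed
  have SH2: "SH \<ge> - (sqrt X * (r * \<kappa> * sqrt Y))"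
    using SH mult_left_mono[OF sq, of "sqrt X"] X by simp
  have "S2 / r \<le> (m-1)/m * r * Y" using S2 r by (simp add: divide_le_eq power2_eq_square mult_ac)
  hence Q2: "Q \<le> r*Y/2 + (m-2)/(2*(m-1)) * ((m-1)/m * r * Y)"
    using Q m by (smt (verit) mult_left_mono divide_nonneg_nonneg times_divide_eq_right)
  have c0: "(m-1)/m * r \<ge> 0" using m r by simp
  have "(m-1)/m * E * r \<le> (m-1)/m * r * (m*K + X/m - (m-2)/(m-1) * \<kappa> * sqrt X * sqrt Y - Y)"
    using mult_left_mono[OF P c0] unfolding \<kappa>_def by (simp add: mult_ac)
  also have "\<dots> = K*(m-1)*r + (m-1)/m\<^sup>2 * X * r + (m-2)/m * (- (sqrt X * (r * \<kappa> * sqrt Y)))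
       - (r*Y/2 + (m-2)/(2*(m-1)) * ((m-1)/m * r * Y))"
    using m by (simp add: field_simps power2_eq_square)
  also have "\<dots> \<le> K*(m-1)*r + (m-1)/m\<^sup>2 * X * r + (m-2)/m * SH - Q"
  proof -
    have "(m-2)/m * (- (sqrt X * (r * \<kappa> * sqrt Y))) \<le> (m-2)/m * SH"
      using SH2 m by (intro mult_left_mono) auto
    thus ?thesis using Q2 by linarith
  qed
  finally show ?thesis .
qed

theorem mainTheorem10:
  fixes n p :: nat and Kb \<epsilon> :: real
    and h :: "'m \<Rightarrow> nat \<Rightarrow> nat \<Rightarrow> nat \<Rightarrow> real"
  assumes "n \<ge> 4" and "Kb > 0" and "\<epsilon> > 0"
    and sym: "\<And>x a i j. h x a i j = h x a j i"
    and pinch: "\<And>x. normAo2 n p (h x)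
                   < aoFun n Kb (normH2 n p (h x)) - \<epsilon> * omegaFun n Kb (normH2 n p (h x))"
  shows "\<forall>x. (\<forall>v. ricci n p Kb (h x) v
                   \<ge> (real n - 1) / real n * \<epsilon> * omegaFun n Kb (normH2 n p (h x)) * vnorm2 n v)
          \<and> (real n - 1) / real n * \<epsilon> * omegaFun n Kb (normH2 n p (h x))
              > \<epsilon> / real n * normH2 n p (h x)"
proof (intro allI conjI)
  fix x
  define g where "g = h x"
  have gsym: "\<And>a i j. g a i j = g a j i" using sym by (simp add: g_def)
  have n4: "n \<ge> 4" and K: "Kb > 0" and e: "\<epsilon> > 0" by fact+
  define X where "X = normH2 n p g"
  define Y where "Y = normAo2 n p g"
  have X0: "X \<ge> 0" unfolding X_def normH2_def by (intro sum_nonneg) simp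
  have Y0: "Y \<ge> 0" unfolding Y_def normAo2_def by (intro sum_nonneg) simp
  have pin: "Y < aoFun n Kb X - \<epsilon> * omegaFun n Kb X" using pinch[of x] unfolding X_def Y_def g_def .
  have m1: "real n - 1 > 0" using n4 by simp
  show "(real n - 1) / real n * \<epsilon> * omegaFun n Kb (normH2 n p (h x)) > \<epsilon> / real n * normH2 n p (h x)"
  proof -
    have "(real n - 1) / real n * \<epsilon> * omegaFun n Kb X = \<epsilon> / real n * X + 2 * (real n - 1) * \<epsilon> * Kb"
      unfolding omegaFun_def using m1 n4 by (simp add: field_simps)
    moreover have "2 * (real n - 1) * \<epsilon> * Kb > 0" using m1 e K by simp
    ultimately show ?thesis unfolding X_def g_def by simp
  qed
  fix v
  define r where "r = vnorm2 n v"
  have r_alt: "r = (\<Sum>i<n. v i * v i)" unfolding r_def vnorm2_def by (simp add: power2_eq_square)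
  have r0: "r \<ge> 0" unfolding r_def vnorm2_def by (intro sum_nonneg) simp
  show "ricci n p Kb (h x) v \<ge> (real n - 1) / real n * \<epsilon> * omegaFun n Kb (normH2 n p (h x)) * vnorm2 n v"
  proof (cases "r = 0")
    case True
    have vz: "v i = 0" if "i < n" for i
    proof -
      have "(\<Sum>i<n. (v i)\<^sup>2) = 0" using True unfolding r_def vnorm2_def .
      hence "\<forall>i\<in>{..<n}. (v i)\<^sup>2 = 0" by (subst (asm) sum_nonneg_eq_0_iff) auto
      thus ?thesis using that by simp
    qed
    have "ricci n p Kb (h x) v = 0" unfolding ricci_def
      by (intro sum.neutral ballI) (simp add: vz)
    thus ?thesis using True unfolding r_def by simp
  next
    case False
    hence rpos: "r > 0" using r0 by simp
    define H where "H a = meanCurv n g a" for a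
    define B where "B a = traceless n g a" for a
    define w where "w a = (\<lambda>i. \<Sum>j<n. B a i j * v j)" for a
    define s where "s a = (\<Sum>i<n. v i * w a i)" for a
    define q where "q a = (\<Sum>i<n. w a i * w a i)" for a
    define N where "N a = (\<Sum>i<n. \<Sum>j<n. B a i j * B a i j)" for a
    have Bsym: "B a i j = B a j i" for a i j unfolding B_def traceless_def using gsym by simp
    have Btr: "(\<Sum>i<n. B a i i) = 0" for a
      unfolding B_def traceless_def meanCurv_def using m1 by (simp add: sum_subtractf)
    have qa: "q a \<le> r * N a / 2 + (real n - 2) / (2 * (real n - 1)) * (s a)\<^sup>2 / r"
      and sa: "(s a)\<^sup>2 \<le> (real n - 1) / real n * r\<^sup>2 * N a" for a
      using mat2[OF Bsym Btr r_alt w_def s_def q_def N_def rpos] n4 by auto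
    have exp: "ricci n p Kb g v = Kb * (real n - 1) * r
        + (\<Sum>a<p. (real n - 1) / (real n)\<^sup>2 * (H a)\<^sup>2 * r + (real n - 2) / real n * H a * s a - q a)"
    proof -
      have "ricci n p Kb g v = Kb * (real n - 1) * r + (\<Sum>a<p. meanCurv n g a * (\<Sum>i<n. \<Sum>k<n. v i * v k * g a i k) - (\<Sum>j<n. (\<Sum>i<n. v i * g a i j)\<^sup>2))"
        using ricci_expand[OF gsym] unfolding r_def .
      also have "\<dots> = Kb * (real n - 1) * r
        + (\<Sum>a<p. (real n - 1) / (real n)\<^sup>2 * (H a)\<^sup>2 * r + (real n - 2) / real n * H a * s a - q a)"
      proof (intro arg_cong[where f="\<lambda>t. Kb * (real n - 1) * r + t"] sum.cong refl)
        fix a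
        have wa: "w a = (\<lambda>i. \<Sum>j<n. traceless n g a i j * v j)" unfolding w_def B_def by simp
        have npos: "n > 0" using n4 by simp
        show "meanCurv n g a * (\<Sum>i<n. \<Sum>k<n. v i * v k * g a i k) - (\<Sum>j<n. (\<Sum>i<n. v i * g a i j)\<^sup>2)
          = (real n - 1) / (real n)\<^sup>2 * (H a)\<^sup>2 * r + (real n - 2) / real n * H a * s a - q a"
          using per_a[OF gsym npos wa refl refl r_alt] unfolding H_def s_def q_def .
      qed
      finally show ?thesis .
    qed
    define SH where "SH = (\<Sum>a<p. H a * s a)"
    define S2 where "S2 = (\<Sum>a<p. (s a)\<^sup>2)"
    define Q where "Q = (\<Sum>a<p. q a)"
    have XH: "X = (\<Sum>a<p. (H a)\<^sup>2)" unfolding X_def normH2_def H_def ..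
    have YN: "Y = (\<Sum>a<p. N a)" unfolding Y_def normAo2_def N_def B_def by (simp add: power2_eq_square)
    have exp2: "ricci n p Kb g v = Kb * (real n - 1) * r + (real n - 1) / (real n)\<^sup>2 * X * r + (real n - 2) / real n * SH - Q"
      unfolding exp SH_def Q_def XH
      by (simp add: sum.distrib sum_subtractf sum_distrib_left sum_distrib_right sum_divide_distrib mult_ac)
    have S20: "S2 \<ge> 0" unfolding S2_def by (intro sum_nonneg) simp
    have S2b: "S2 \<le> (real n - 1) / real n * r\<^sup>2 * Y"
    proof -
      have "S2 \<le> (\<Sum>a<p. (real n - 1) / real n * r\<^sup>2 * N a)" unfolding S2_def by (intro sum_mono sa)
      also have "\<dots> = (real n - 1) / real n * r\<^sup>2 * Y" unfolding YN by (simp add: sum_distrib_left)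
      finally show ?thesis .
    qed
    have Qb: "Q \<le> r * Y / 2 + (real n - 2) / (2 * (real n - 1)) * S2 / r"
    proof -
      have "Q \<le> (\<Sum>a<p. r * N a / 2 + (real n - 2) / (2 * (real n - 1)) * (s a)\<^sup>2 / r)" unfolding Q_def by (intro sum_mono qa)
      also have "\<dots> = r * Y / 2 + (real n - 2) / (2 * (real n - 1)) * S2 / r"
        unfolding YN S2_def by (simp add: sum.distrib sum_distrib_left sum_divide_distrib)
      finally show ?thesis .
    qed
    have SHb: "SH \<ge> - (sqrt X * sqrt S2)"
    proof -
      have "SH\<^sup>2 \<le> X * S2" unfolding SH_def XH S2_def by (rule Cauchy_Schwarz_ineq_sum)
      hence "sqrt (SH\<^sup>2) \<le> sqrt (X * S2)" by (rule real_sqrt_le_mono)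
      hence "\<bar>SH\<bar> \<le> sqrt X * sqrt S2" by (simp add: real_sqrt_mult)
      thus ?thesis by linarith
    qed
    have P: "\<epsilon> * omegaFun n Kb X \<le> real n * Kb + X / real n
           - (real n - 2) / (real n - 1) * sqrt ((real n - 1) / real n) * sqrt X * sqrt Y - Y"
      by (rule scalar[OF n4 K e X0 Y0 pin])
    have "(real n - 1) / real n * (\<epsilon> * omegaFun n Kb X) * r \<le> Kb * (real n - 1) * r + (real n - 1) / (real n)\<^sup>2 * X * r + (real n - 2) / real n * SH - Q"
      by (rule combine[OF _ rpos X0 Y0 S20 S2b SHb Qb P]) (use n4 in simp)
    hence "(real n - 1) / real n * (\<epsilon> * omegaFun n Kb X) * r \<le> ricci n p Kb g v" unfolding exp2 .
    thus ?thesis unfolding X_def r_def g_def by (simp add: mult_ac)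
  qed
qed

end
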